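(* Let $\mathcal X$ be a non-empty finite set, $\mathcal A_x$ non-empty finite sets, $\mathcal Z=\{(x,a):x\in\mathcal X,a\in\mathcal A_x\}$, $P(x,a,\cdot)$ probability measures on $\mathcal X$, $S(x,a,y,\cdot)$ probability measures on $\mathbb R$ with finite second moments, and $\gamma\in[0,1)$. For a function $\varepsilon:\mathcal X\to[0,1]$, a function $q:\mathcal Z\to\mathbb R$ and $x\in\mathcal X$, define the probability measure $\pi^\varepsilon_q(x,\cdot)$ on $\mathcal A_x$ by $$\pi^\varepsilon_q(x,a)=\frac{\varepsilon(x)}{|\mathcal A_x|}+\mathbf 1_{\{a\in\arg\max q(x,\cdot)\}}\frac{1-\varepsilon(x)}{|\arg\max q(x,\cdot)|},$$ and define $\mathcal H(\varepsilon,q):\mathcal Z\to\mathbb R$ by $\mathcal H(\varepsilon,q)(x,a)=Q_{\pi^\varepsilon_q}(x,a)$. Then $\mathcal H(\varepsilon,q)(x,a)\le Q^*(x,a)$ for all $(x,a)\in\mathcal Z$ and $$\|\mathcal H(\varepsilon,q)-Q^*\|_\infty\le\frac{\gamma}{1-\gamma}\Big(\|Q^*-q\|_\infty+\|(q-Q^* )_+\|_\infty+2\|Q^*\|_\infty\|\varepsilon\|_\infty\Big),$$ where $(q-Q^* )_+(x,a)=\max\{q(x,a)-Q^*(x,a),0\}$ and $\|\cdot\|_\infty$ denotes the max norm.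
   Context: For an SM policy $\pi$ (a family of probability measures $\pi(x,\cdot)$ on $\mathcal A_x$) and $x\in\mathcal X$: $X_0=x$, $A_t\sim\pi(X_t,\cdot)$, $X_{t+1}\sim P(X_t,A_t,\cdot)$ given the past, and conditionally on the state-action process the rewards $R_{t+1}\sim S(X_t,A_t,X_{t+1},\cdot)$ are independent; $V_\pi(x)=\mathbb E_{x,\pi}[\sum_{t\ge0}\gamma^tR_{t+1}]$. General (history-dependent) policies $\Pi$ are defined analogously with $A_t$ drawn from $\Pi_t(H_t,\cdot)$, $H_t=(X_0,A_0,\dots,X_t)$, and $V^*(x)=\sup_\Pi V_\Pi(x)$. Let $g(x,a,y)=\int z\,S(x,a,y,dz)$, $r(x,a)=\sum_yP(x,a,y)g(x,a,y)$, $Q_\pi(x,a)=r(x,a)+\gamma\sum_yP(x,a,y)V_\pi(y)$ and $Q^*(x,a)=r(x,a)+\gamma\sum_yP(x,a,y)V^*(y)$. *)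

theory Defs
  imports "HOL-Probability.Probability"
begin

definition rmean :: "('x \<Rightarrow> 'a \<Rightarrow> 'x \<Rightarrow> real measure) \<Rightarrow> 'x \<Rightarrow> 'a \<Rightarrow> 'x \<Rightarrow> real" where
  "rmean S x a y = integral\<^sup>L (S x a y) (\<lambda>z. z)"

text \<open>Distribution of (A_0 X_0 ... pairs, current state) i.e. of the history
  H_t = (X_0,A_0,...,X_t), encoded as (list of (X_i,A_i) for i<t, X_t),
  under a general (history-dependent) policy Pol started in x.\<close>
primrec hist_dist ::
  "(('x \<times> 'a) list \<Rightarrow> 'x \<Rightarrow> 'a pmf) \<Rightarrow> ('x \<Rightarrow> 'a \<Rightarrow> 'x pmf) \<Rightarrow> 'x \<Rightarrow> nat
     \<Rightarrow> (('x \<times> 'a) list \<times> 'x) pmf" where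
  "hist_dist Pol P x 0 = return_pmf ([], x)"
| "hist_dist Pol P x (Suc t) =
     bind_pmf (hist_dist Pol P x t) (\<lambda>(h, y). bind_pmf (Pol h y)
        (\<lambda>a. map_pmf (\<lambda>y'. (h @ [(y, a)], y')) (P y a)))"

text \<open>E[R_{t+1}] = E[g(X_t,A_t,X_{t+1})] (rewards are conditionally independent
  with law S(X_t,A_t,X_{t+1},.)).\<close>
definition exp_reward ::
  "(('x \<times> 'a) list \<Rightarrow> 'x \<Rightarrow> 'a pmf) \<Rightarrow> ('x \<Rightarrow> 'a \<Rightarrow> 'x pmf)
     \<Rightarrow> ('x \<Rightarrow> 'a \<Rightarrow> 'x \<Rightarrow> real measure) \<Rightarrow> 'x \<Rightarrow> nat \<Rightarrow> real" where
  "exp_reward Pol P S x t =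
     measure_pmf.expectation (hist_dist Pol P x (Suc t))
       (\<lambda>(h, y'). case last h of (y, a) \<Rightarrow> rmean S y a y')"

text \<open>V_Pi(x) = E_{x,Pol}[sum_t gamma^t R_{t+1}] = sum_t gamma^t E_{x,Pol}[R_{t+1}].\<close>
definition val_hist ::
  "(('x \<times> 'a) list \<Rightarrow> 'x \<Rightarrow> 'a pmf) \<Rightarrow> ('x \<Rightarrow> 'a \<Rightarrow> 'x pmf)
     \<Rightarrow> ('x \<Rightarrow> 'a \<Rightarrow> 'x \<Rightarrow> real measure) \<Rightarrow> real \<Rightarrow> 'x \<Rightarrow> real" where
  "val_hist Pol P S \<gamma> x = (\<Sum>t. \<gamma> ^ t * exp_reward Pol P S x t)"

definition val_sm ::
  "('x \<Rightarrow> 'a pmf) \<Rightarrow> ('x \<Rightarrow> 'a \<Rightarrow> 'x pmf)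
     \<Rightarrow> ('x \<Rightarrow> 'a \<Rightarrow> 'x \<Rightarrow> real measure) \<Rightarrow> real \<Rightarrow> 'x \<Rightarrow> real" where
  "val_sm pol P S \<gamma> x = val_hist (\<lambda>h y. pol y) P S \<gamma> x"

definition hist_policies :: "('x \<Rightarrow> 'a set) \<Rightarrow> (('x \<times> 'a) list \<Rightarrow> 'x \<Rightarrow> 'a pmf) set" where
  "hist_policies A = {Pol. \<forall>h y. set_pmf (Pol h y) \<subseteq> A y}"

definition val_opt ::
  "('x \<Rightarrow> 'a set) \<Rightarrow> ('x \<Rightarrow> 'a \<Rightarrow> 'x pmf)
     \<Rightarrow> ('x \<Rightarrow> 'a \<Rightarrow> 'x \<Rightarrow> real measure) \<Rightarrow> real \<Rightarrow> 'x \<Rightarrow> real" where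
  "val_opt A P S \<gamma> x = (SUP Pol \<in> hist_policies A. val_hist Pol P S \<gamma> x)"

definition rexp :: "('x::finite \<Rightarrow> 'a \<Rightarrow> 'x pmf) \<Rightarrow> ('x \<Rightarrow> 'a \<Rightarrow> 'x \<Rightarrow> real measure) \<Rightarrow> 'x \<Rightarrow> 'a \<Rightarrow> real" where
  "rexp P S x a = (\<Sum>y\<in>UNIV. pmf (P x a) y * rmean S x a y)"

definition Q_sm ::
  "('x::finite \<Rightarrow> 'a pmf) \<Rightarrow> ('x \<Rightarrow> 'a \<Rightarrow> 'x pmf)
     \<Rightarrow> ('x \<Rightarrow> 'a \<Rightarrow> 'x \<Rightarrow> real measure) \<Rightarrow> real \<Rightarrow> 'x \<Rightarrow> 'a \<Rightarrow> real" where
  "Q_sm pol P S \<gamma> x a = rexp P S x a + \<gamma> * (\<Sum>y\<in>UNIV. pmf (P x a) y * val_sm pol P S \<gamma> y)"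

definition Q_opt ::
  "('x::finite \<Rightarrow> 'a set) \<Rightarrow> ('x \<Rightarrow> 'a \<Rightarrow> 'x pmf)
     \<Rightarrow> ('x \<Rightarrow> 'a \<Rightarrow> 'x \<Rightarrow> real measure) \<Rightarrow> real \<Rightarrow> 'x \<Rightarrow> 'a \<Rightarrow> real" where
  "Q_opt A P S \<gamma> x a = rexp P S x a + \<gamma> * (\<Sum>y\<in>UNIV. pmf (P x a) y * val_opt A P S \<gamma> y)"

definition argmax_set :: "('x \<Rightarrow> 'a set) \<Rightarrow> ('x \<Rightarrow> 'a \<Rightarrow> real) \<Rightarrow> 'x \<Rightarrow> 'a set" where
  "argmax_set A q x = {a \<in> A x. \<forall>b \<in> A x. q x b \<le> q x a}"

definition eps_greedy :: "('x \<Rightarrow> 'a set) \<Rightarrow> ('x \<Rightarrow> real) \<Rightarrow> ('x \<Rightarrow> 'a \<Rightarrow> real) \<Rightarrow> 'x \<Rightarrow> 'a pmf" where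
  "eps_greedy A \<epsilon> q x = embed_pmf (\<lambda>a.
      (if a \<in> A x then \<epsilon> x / real (card (A x)) else 0)
    + (if a \<in> argmax_set A q x then (1 - \<epsilon> x) / real (card (argmax_set A q x)) else 0))"

definition H_op ::
  "('x::finite \<Rightarrow> 'a set) \<Rightarrow> ('x \<Rightarrow> 'a \<Rightarrow> 'x pmf) \<Rightarrow> ('x \<Rightarrow> 'a \<Rightarrow> 'x \<Rightarrow> real measure) \<Rightarrow> real
     \<Rightarrow> ('x \<Rightarrow> real) \<Rightarrow> ('x \<Rightarrow> 'a \<Rightarrow> real) \<Rightarrow> 'x \<Rightarrow> 'a \<Rightarrow> real" where
  "H_op A P S \<gamma> \<epsilon> q x a = Q_sm (eps_greedy A \<epsilon> q) P S \<gamma> x a"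

definition supZ :: "('x \<Rightarrow> 'a set) \<Rightarrow> ('x \<Rightarrow> 'a \<Rightarrow> real) \<Rightarrow> real" where
  "supZ A f = Max {\<bar>f x a\<bar> | x a. a \<in> A x}"

end

theory Submission imports Defs begin

lemma hist_dist_Suc':
  "hist_dist Pol P x (Suc t) = bind_pmf (Pol [] x) (\<lambda>a. bind_pmf (P x a) (\<lambda>y.
      map_pmf (\<lambda>(h,z). ((x,a)#h, z)) (hist_dist (\<lambda>h. Pol ((x,a)#h)) P y t)))"
proof (induction t)
  case 0
  then show ?case by (simp add: map_pmf_def bind_return_pmf)
next
  case (Suc t)
  show ?case
    apply (subst hist_dist.simps)
    apply (subst Suc)
    apply (simp add: bind_assoc_pmf map_bind_pmf bind_map_pmf map_pmf_comp case_prod_beta)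
    done
qed

lemma hist_dist_support:
  assumes "Pol \<in> hist_policies A"
  shows "(h,y) \<in> set_pmf (hist_dist Pol P x t) \<Longrightarrow> length h = t \<and> (\<forall>(z,b)\<in>set h. b \<in> A z)"
proof (induction t arbitrary: h y)
  case 0
  then show ?case by simp
next
  case (Suc t)
  from Suc.prems obtain h0 y0 a where h0: "(h0,y0) \<in> set_pmf (hist_dist Pol P x t)"
    and a: "a \<in> set_pmf (Pol h0 y0)" and hh: "h = h0 @ [(y0,a)]"
    by (auto simp: set_bind_pmf)
  have "a \<in> A y0" using a assms unfolding hist_policies_def by blast
  then show ?case using Suc.IH[OF h0] hh by auto
qed

lemma hist_dist_finite:
  fixes P :: "'x::finite \<Rightarrow> 'a \<Rightarrow> 'x pmf"
  assumes "Pol \<in> hist_policies A" "\<And>x. finite (A x)"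
  shows "finite (set_pmf (hist_dist Pol P x t))"
proof (induction t)
  case 0
  then show ?case by simp
next
  case (Suc t)
  have "\<And>h y. finite (set_pmf (Pol h y))"
  proof -
    fix h y
    have "set_pmf (Pol h y) \<subseteq> A y" using assms(1) unfolding hist_policies_def by blast
    then show "finite (set_pmf (Pol h y))" using assms(2) by (rule finite_subset)
  qed
  then show ?case using Suc by (auto simp: set_bind_pmf)
qed

lemma integral_bind_pmf_fin:
  fixes f :: "'b \<Rightarrow> real"
  assumes M: "finite (set_pmf M)" and N: "\<And>a. a \<in> set_pmf M \<Longrightarrow> finite (set_pmf (N a))"
  shows "measure_pmf.expectation (bind_pmf M N) f
       = measure_pmf.expectation M (\<lambda>a. measure_pmf.expectation (N a) f)"
proof -
  define T where "T = (\<Union>a\<in>set_pmf M. set_pmf (N a))"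
  have T: "finite T" using M N unfolding T_def by auto
  have "measure_pmf.expectation (bind_pmf M N) f = (\<Sum>x\<in>T. f x * pmf (bind_pmf M N) x)"
    by (rule integral_measure_pmf_real[OF T]) (auto simp: T_def set_bind_pmf)
  also have "\<dots> = (\<Sum>x\<in>T. f x * (\<Sum>a\<in>set_pmf M. pmf (N a) x * pmf M a))"
  proof (rule sum.cong[OF refl])
    fix x
    have "pmf (bind_pmf M N) x = (\<Sum>a\<in>set_pmf M. pmf (N a) x * pmf M a)"
      unfolding pmf_bind by (rule integral_measure_pmf_real[OF M]) auto
    then show "f x * pmf (bind_pmf M N) x = f x * (\<Sum>a\<in>set_pmf M. pmf (N a) x * pmf M a)"
      by simp
  qed
  also have "\<dots> = (\<Sum>a\<in>set_pmf M. (\<Sum>x\<in>T. f x * pmf (N a) x) * pmf M a)"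
    unfolding sum_distrib_left sum_distrib_right
    by (subst sum.swap) (simp add: mult.assoc)
  also have "\<dots> = (\<Sum>a\<in>set_pmf M. measure_pmf.expectation (N a) f * pmf M a)"
  proof (rule sum.cong[OF refl])
    fix a assume a: "a \<in> set_pmf M"
    have "measure_pmf.expectation (N a) f = (\<Sum>x\<in>T. f x * pmf (N a) x)"
      by (rule integral_measure_pmf_real[OF T]) (use a in \<open>auto simp: T_def\<close>)
    then show "(\<Sum>x\<in>T. f x * pmf (N a) x) * pmf M a = measure_pmf.expectation (N a) f * pmf M a"
      by simp
  qed
  also have "\<dots> = measure_pmf.expectation M (\<lambda>a. measure_pmf.expectation (N a) f)"
    by (rule integral_measure_pmf_real[OF M, symmetric]) auto
  finally show ?thesis .
qed

lemma convex_le: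
  fixes p g :: "'b \<Rightarrow> real"
  assumes "\<And>i. i \<in> I \<Longrightarrow> 0 \<le> p i" "sum p I = 1" "\<And>i. i \<in> I \<Longrightarrow> g i \<le> B"
  shows "(\<Sum>i\<in>I. p i * g i) \<le> B"
proof -
  have "(\<Sum>i\<in>I. p i * g i) \<le> (\<Sum>i\<in>I. p i * B)"
    using assms by (intro sum_mono mult_left_mono) auto
  also have "\<dots> = B" using assms(2) by (simp add: sum_distrib_right[symmetric])
  finally show ?thesis .
qed

lemma convex_abs_le:
  fixes p g :: "'b \<Rightarrow> real"
  assumes "\<And>i. i \<in> I \<Longrightarrow> 0 \<le> p i" "sum p I = 1" "\<And>i. i \<in> I \<Longrightarrow> \<bar>g i\<bar> \<le> B"
  shows "\<bar>\<Sum>i\<in>I. p i * g i\<bar> \<le> B"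
proof -
  have "(\<Sum>i\<in>I. p i * g i) \<le> B" using assms by (intro convex_le) (auto simp: abs_le_iff)
  moreover have "(\<Sum>i\<in>I. p i * (- g i)) \<le> B" using assms by (intro convex_le) (auto simp: abs_le_iff)
  ultimately show ?thesis by (simp add: sum_negf)
qed


lemma pmf_integral_cong:
  fixes f g :: "'b \<Rightarrow> real"
  assumes "\<And>x. x \<in> set_pmf M \<Longrightarrow> f x = g x"
  shows "measure_pmf.expectation M f = measure_pmf.expectation M g"
  using assms by (intro integral_cong_AE) (auto intro: AE_pmfI)

lemma pol_shift: "Pol \<in> hist_policies A \<Longrightarrow> (\<lambda>h. Pol (xa # h)) \<in> hist_policies A"
  unfolding hist_policies_def by auto

lemma pol_fin: "Pol \<in> hist_policies A \<Longrightarrow> finite (A x) \<Longrightarrow> finite (set_pmf (Pol h x))"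
proof -
  assume "Pol \<in> hist_policies A" "finite (A x)"
  then have "set_pmf (Pol h x) \<subseteq> A x" unfolding hist_policies_def by blast
  then show ?thesis using \<open>finite (A x)\<close> by (rule finite_subset)
qed

lemma pol_exp_sum:
  fixes g :: "'a \<Rightarrow> real"
  assumes "Pol \<in> hist_policies A" "finite (A x)"
  shows "measure_pmf.expectation (Pol h x) g = (\<Sum>a\<in>A x. pmf (Pol h x) a * g a)"
proof -
  have "measure_pmf.expectation (Pol h x) g = (\<Sum>a\<in>A x. g a * pmf (Pol h x) a)"
    by (rule integral_measure_pmf_real[OF assms(2)]) (use assms(1) in \<open>auto simp: hist_policies_def\<close>)
  then show ?thesis by (simp add: mult.commute)
qed

lemma P_exp_sum:
  fixes g :: "'x::finite \<Rightarrow> real"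
  shows "measure_pmf.expectation M g = (\<Sum>y\<in>UNIV. pmf M y * g y)"
proof -
  have "measure_pmf.expectation M g = (\<Sum>y\<in>UNIV. g y * pmf M y)"
    by (rule integral_measure_pmf_real) auto
  then show ?thesis by (simp add: mult.commute)
qed

lemma exp_reward_0:
  fixes P :: "'x::finite \<Rightarrow> 'a \<Rightarrow> 'x pmf"
  assumes pol: "Pol \<in> hist_policies A" and fin: "finite (A x)"
  shows "exp_reward Pol P S x 0 = (\<Sum>a\<in>A x. pmf (Pol [] x) a * rexp P S x a)"
proof -
  have hd: "hist_dist Pol P x (Suc 0) = bind_pmf (Pol [] x) (\<lambda>a. map_pmf (\<lambda>y. ([(x,a)], y)) (P x a))"
    by (simp add: bind_return_pmf)
  have "exp_reward Pol P S x 0 = measure_pmf.expectation (Pol [] x)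
          (\<lambda>a. measure_pmf.expectation (map_pmf (\<lambda>y. ([(x,a)], y)) (P x a))
             (\<lambda>(h, y'). case last h of (y, a) \<Rightarrow> rmean S y a y'))"
    unfolding exp_reward_def hd
    by (rule integral_bind_pmf_fin) (auto intro: pol_fin[OF pol fin])
  also have "\<dots> = measure_pmf.expectation (Pol [] x) (\<lambda>a. rexp P S x a)"
    by (simp add: rexp_def P_exp_sum)
  finally show ?thesis by (simp add: pol_exp_sum[OF pol fin])
qed

lemma exp_reward_Suc:
  fixes P :: "'x::finite \<Rightarrow> 'a \<Rightarrow> 'x pmf"
  assumes pol: "Pol \<in> hist_policies A" and fin: "\<And>x. finite (A x)"
  shows "exp_reward Pol P S x (Suc t) = (\<Sum>a\<in>A x. pmf (Pol [] x) a *
      (\<Sum>y\<in>UNIV. pmf (P x a) y * exp_reward (\<lambda>h. Pol ((x,a)#h)) P S y t))"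
proof -
  define fR :: "('x \<times> 'a) list \<times> 'x \<Rightarrow> real" where
    "fR = (\<lambda>(h, y'). case last h of (y, a) \<Rightarrow> rmean S y a y')"
  have e: "exp_reward Q P S z s = measure_pmf.expectation (hist_dist Q P z (Suc s)) fR" for Q z s
    unfolding exp_reward_def fR_def ..
  have "exp_reward Pol P S x (Suc t) = measure_pmf.expectation (Pol [] x) (\<lambda>a.
     measure_pmf.expectation (bind_pmf (P x a) (\<lambda>y.
      map_pmf (\<lambda>(h,z). ((x,a)#h, z)) (hist_dist (\<lambda>h. Pol ((x,a)#h)) P y (Suc t)))) fR)"
    unfolding e hist_dist_Suc'[of Pol P x "Suc t"]
    by (rule integral_bind_pmf_fin)
       (auto intro!: pol_fin[OF pol fin] hist_dist_finite[OF pol_shift[OF pol] fin]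
         simp: set_bind_pmf simp del: hist_dist.simps)
  also have "\<dots> = measure_pmf.expectation (Pol [] x) (\<lambda>a. measure_pmf.expectation (P x a) (\<lambda>y.
      exp_reward (\<lambda>h. Pol ((x,a)#h)) P S y t))"
  proof (rule pmf_integral_cong)
    fix a
    have "measure_pmf.expectation (bind_pmf (P x a) (\<lambda>y.
      map_pmf (\<lambda>(h,z). ((x,a)#h, z)) (hist_dist (\<lambda>h. Pol ((x,a)#h)) P y (Suc t)))) fR
      = measure_pmf.expectation (P x a) (\<lambda>y. measure_pmf.expectation
          (map_pmf (\<lambda>(h,z). ((x,a)#h, z)) (hist_dist (\<lambda>h. Pol ((x,a)#h)) P y (Suc t))) fR)"
      by (rule integral_bind_pmf_fin)
         (auto intro!: hist_dist_finite[OF pol_shift[OF pol] fin] simp del: hist_dist.simps)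
    also have "\<dots> = measure_pmf.expectation (P x a) (\<lambda>y. exp_reward (\<lambda>h. Pol ((x,a)#h)) P S y t)"
    proof (rule pmf_integral_cong)
      fix y
      have "measure_pmf.expectation
          (map_pmf (\<lambda>(h,z). ((x,a)#h, z)) (hist_dist (\<lambda>h. Pol ((x,a)#h)) P y (Suc t))) fR
        = measure_pmf.expectation (hist_dist (\<lambda>h. Pol ((x,a)#h)) P y (Suc t)) (\<lambda>p. fR ((x,a) # fst p, snd p))"
        by (simp add: case_prod_beta)
      also have "\<dots> = measure_pmf.expectation (hist_dist (\<lambda>h. Pol ((x,a)#h)) P y (Suc t)) fR"
      proof (rule pmf_integral_cong)
        fix p assume "p \<in> set_pmf (hist_dist (\<lambda>h. Pol ((x,a)#h)) P y (Suc t))"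
        then have "length (fst p) = Suc t"
          using hist_dist_support[OF pol_shift[OF pol], of "fst p" "snd p"] by auto
        then show "fR ((x,a) # fst p, snd p) = fR p" unfolding fR_def
          by (cases p) auto
      qed
      finally show "measure_pmf.expectation
          (map_pmf (\<lambda>(h,z). ((x,a)#h, z)) (hist_dist (\<lambda>h. Pol ((x,a)#h)) P y (Suc t))) fR
          = exp_reward (\<lambda>h. Pol ((x,a)#h)) P S y t" unfolding e .
    qed
    finally show "measure_pmf.expectation (bind_pmf (P x a) (\<lambda>y.
      map_pmf (\<lambda>(h,z). ((x,a)#h, z)) (hist_dist (\<lambda>h. Pol ((x,a)#h)) P y (Suc t)))) fR
      = measure_pmf.expectation (P x a) (\<lambda>y. exp_reward (\<lambda>h. Pol ((x,a)#h)) P S y t)" .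
  qed
  finally show ?thesis by (simp add: pol_exp_sum[OF pol fin] P_exp_sum)
qed


lemma pol_sum1: "Pol \<in> hist_policies A \<Longrightarrow> finite (A x) \<Longrightarrow> (\<Sum>a\<in>A x. pmf (Pol h x) a) = 1"
  by (rule sum_pmf_eq_1) (auto simp: hist_policies_def)

lemma P_sum1: "(\<Sum>y\<in>(UNIV::'x::finite set). pmf M y) = 1"
  by (rule sum_pmf_eq_1) auto

lemma rexp_bound:
  fixes P :: "'x::finite \<Rightarrow> 'a \<Rightarrow> 'x pmf"
  assumes RB: "\<And>y a y'. a \<in> A y \<Longrightarrow> \<bar>rmean S y a y'\<bar> \<le> B" and a: "a \<in> A x"
  shows "\<bar>rexp P S x a\<bar> \<le> B"
  unfolding rexp_def by (rule convex_abs_le) (auto simp: P_sum1 RB a)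

lemma exp_reward_bound:
  fixes P :: "'x::finite \<Rightarrow> 'a \<Rightarrow> 'x pmf"
  assumes pol: "Pol \<in> hist_policies A" and fin: "\<And>x. finite (A x)"
    and RB: "\<And>y a y'. a \<in> A y \<Longrightarrow> \<bar>rmean S y a y'\<bar> \<le> B"
  shows "\<bar>exp_reward Pol P S x t\<bar> \<le> B"
  using pol
proof (induction t arbitrary: Pol x)
  case 0
  show ?case unfolding exp_reward_0[OF 0 fin]
    by (rule convex_abs_le) (auto simp: pol_sum1[OF 0 fin] intro: rexp_bound[OF RB])
next
  case (Suc t)
  show ?case unfolding exp_reward_Suc[OF Suc.prems fin]
    by (rule convex_abs_le) (auto simp: pol_sum1[OF Suc.prems fin] P_sum1
        intro!: convex_abs_le Suc.IH pol_shift[OF Suc.prems])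
qed

lemma val_summable:
  fixes P :: "'x::finite \<Rightarrow> 'a \<Rightarrow> 'x pmf"
  assumes pol: "Pol \<in> hist_policies A" and fin: "\<And>x. finite (A x)"
    and RB: "\<And>y a y'. a \<in> A y \<Longrightarrow> \<bar>rmean S y a y'\<bar> \<le> B"
    and g: "0 \<le> \<gamma>" "\<gamma> < 1"
  shows "summable (\<lambda>t. \<gamma> ^ t * exp_reward Pol P S x t)"
proof (rule summable_comparison_test)
  show "\<exists>N. \<forall>n\<ge>N. norm (\<gamma> ^ n * exp_reward Pol P S x n) \<le> B * \<gamma> ^ n"
  proof (intro exI allI impI)
    fix n :: nat
    have "\<gamma> ^ n * \<bar>exp_reward Pol P S x n\<bar> \<le> \<gamma> ^ n * B"
      using exp_reward_bound[OF pol fin RB] g by (intro mult_left_mono) auto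
    then show "norm (\<gamma> ^ n * exp_reward Pol P S x n) \<le> B * \<gamma> ^ n"
      using g by (simp add: abs_mult mult.commute)
  qed
  show "summable (\<lambda>n. B * \<gamma> ^ n)"
    using g by (intro summable_mult summable_geometric) auto
qed

lemma val_bound:
  fixes P :: "'x::finite \<Rightarrow> 'a \<Rightarrow> 'x pmf"
  assumes pol: "Pol \<in> hist_policies A" and fin: "\<And>x. finite (A x)"
    and RB: "\<And>y a y'. a \<in> A y \<Longrightarrow> \<bar>rmean S y a y'\<bar> \<le> B"
    and g: "0 \<le> \<gamma>" "\<gamma> < 1"
  shows "\<bar>val_hist Pol P S \<gamma> x\<bar> \<le> B / (1 - \<gamma>)"
proof -
  have sg: "summable (\<lambda>n. B * \<gamma> ^ n)" "summable (\<lambda>n. - B * \<gamma> ^ n)"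
    using g by (intro summable_mult summable_geometric; auto)+
  have sumg: "(\<Sum>n. B * \<gamma> ^ n) = B / (1 - \<gamma>)" "(\<Sum>n. - B * \<gamma> ^ n) = - (B / (1 - \<gamma>))"
  proof -
    have gs: "summable (\<lambda>n. \<gamma> ^ n)" using g by (intro summable_geometric) auto
    have "(\<Sum>n. \<gamma> ^ n) = 1 / (1 - \<gamma>)" using g by (intro suminf_geometric) auto
    then show "(\<Sum>n. B * \<gamma> ^ n) = B / (1 - \<gamma>)" "(\<Sum>n. - B * \<gamma> ^ n) = - (B / (1 - \<gamma>))"
      using suminf_mult[OF gs, of B] suminf_mult[OF gs, of "-B"] by simp_all
  qed
  have b: "\<bar>\<gamma> ^ n * exp_reward Pol P S x n\<bar> \<le> B * \<gamma> ^ n" for n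
  proof -
    have "\<gamma> ^ n * \<bar>exp_reward Pol P S x n\<bar> \<le> \<gamma> ^ n * B"
      using exp_reward_bound[OF pol fin RB, of P x n] g by (intro mult_left_mono) auto
    then show ?thesis using g by (simp add: abs_mult mult.commute)
  qed
  have "val_hist Pol P S \<gamma> x \<le> B / (1 - \<gamma>)"
    unfolding val_hist_def sumg(1)[symmetric]
    by (rule suminf_le) (use b val_summable[OF pol fin RB g] sg in \<open>auto simp: abs_le_iff\<close>)
  moreover have "- (B / (1 - \<gamma>)) \<le> val_hist Pol P S \<gamma> x"
    unfolding val_hist_def sumg(2)[symmetric]
  proof (rule suminf_le)
    fix n show "- B * \<gamma> ^ n \<le> \<gamma> ^ n * exp_reward Pol P S x n"
      using b[of n] by (simp add: abs_le_iff)
  qed (use val_summable[OF pol fin RB g] sg in auto)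
  ultimately show ?thesis by auto
qed

lemma val_decomp:
  fixes P :: "'x::finite \<Rightarrow> 'a \<Rightarrow> 'x pmf"
  assumes pol: "Pol \<in> hist_policies A" and fin: "\<And>x. finite (A x)"
    and RB: "\<And>y a y'. a \<in> A y \<Longrightarrow> \<bar>rmean S y a y'\<bar> \<le> B"
    and g: "0 \<le> \<gamma>" "\<gamma> < 1"
  shows "val_hist Pol P S \<gamma> x = (\<Sum>a\<in>A x. pmf (Pol [] x) a * (rexp P S x a
      + \<gamma> * (\<Sum>y\<in>UNIV. pmf (P x a) y * val_hist (\<lambda>h. Pol ((x,a)#h)) P S \<gamma> y)))"
proof -
  define f where "f = (\<lambda>t. \<gamma> ^ t * exp_reward Pol P S x t)"
  define e where "e = (\<lambda>a y t. \<gamma> ^ t * exp_reward (\<lambda>h. Pol ((x,a)#h)) P S y t)"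
  have sf: "summable f" unfolding f_def by (rule val_summable[OF pol fin RB g])
  have se: "summable (e a y)" for a y unfolding e_def
    by (rule val_summable[OF pol_shift[OF pol] fin RB g])
  have "val_hist Pol P S \<gamma> x = f 0 + (\<Sum>n. f (Suc n))"
    using suminf_split_head[OF sf] unfolding val_hist_def f_def by simp
  also have "f 0 = (\<Sum>a\<in>A x. pmf (Pol [] x) a * rexp P S x a)"
    unfolding f_def by (simp add: exp_reward_0[OF pol fin])
  also have "(\<lambda>n. f (Suc n)) = (\<lambda>n. \<Sum>a\<in>A x. \<Sum>y\<in>UNIV. (\<gamma> * pmf (Pol [] x) a * pmf (P x a) y) * e a y n)"
    unfolding f_def e_def exp_reward_Suc[OF pol fin]
    by (simp add: sum_distrib_left mult_ac)
  also have "(\<Sum>n. \<Sum>a\<in>A x. \<Sum>y\<in>UNIV. (\<gamma> * pmf (Pol [] x) a * pmf (P x a) y) * e a y n)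
     = (\<Sum>a\<in>A x. \<Sum>y\<in>UNIV. (\<gamma> * pmf (Pol [] x) a * pmf (P x a) y) * (\<Sum>n. e a y n))"
  proof -
    have "(\<Sum>n. \<Sum>a\<in>A x. \<Sum>y\<in>UNIV. (\<gamma> * pmf (Pol [] x) a * pmf (P x a) y) * e a y n)
      = (\<Sum>a\<in>A x. \<Sum>n. \<Sum>y\<in>UNIV. (\<gamma> * pmf (Pol [] x) a * pmf (P x a) y) * e a y n)"
      by (rule suminf_sum) (intro summable_sum summable_mult se)
    also have "\<dots> = (\<Sum>a\<in>A x. \<Sum>y\<in>UNIV. \<Sum>n. (\<gamma> * pmf (Pol [] x) a * pmf (P x a) y) * e a y n)"
      by (intro sum.cong refl suminf_sum summable_mult se)
    also have "\<dots> = (\<Sum>a\<in>A x. \<Sum>y\<in>UNIV. (\<gamma> * pmf (Pol [] x) a * pmf (P x a) y) * (\<Sum>n. e a y n))"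
      by (intro sum.cong refl suminf_mult se)
    finally show ?thesis .
  qed
  also have "\<dots> = (\<Sum>a\<in>A x. pmf (Pol [] x) a * (\<gamma> * (\<Sum>y\<in>UNIV. pmf (P x a) y * val_hist (\<lambda>h. Pol ((x,a)#h)) P S \<gamma> y)))"
    unfolding e_def val_hist_def by (simp add: sum_distrib_left mult_ac)
  finally show ?thesis by (simp add: sum.distrib distrib_left)
qed


lemma supZ_fin:
  fixes A :: "'x::finite \<Rightarrow> 'a set"
  assumes "\<And>x. finite (A x)"
  shows "finite {\<bar>f x a\<bar> | x a. a \<in> A x}"
proof (rule finite_subset[of _ "(\<lambda>(x,a). \<bar>f x a\<bar>) ` (SIGMA x:UNIV. A x)"])
  show "finite ((\<lambda>(x,a). \<bar>f x a\<bar>) ` (SIGMA x:UNIV. A x))"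
    using assms by (intro finite_imageI finite_SigmaI) auto
qed auto

lemma supZ_ge:
  fixes A :: "'x::finite \<Rightarrow> 'a set"
  assumes "\<And>x. finite (A x)" "a \<in> A x"
  shows "\<bar>f x a\<bar> \<le> supZ A f"
  unfolding supZ_def by (rule Max_ge[OF supZ_fin[OF assms(1)]]) (use assms(2) in blast)

lemma supZ_le:
  fixes A :: "'x::finite \<Rightarrow> 'a set"
  assumes "\<And>x. finite (A x)" "\<And>x. A x \<noteq> {}" "\<And>x a. a \<in> A x \<Longrightarrow> \<bar>f x a\<bar> \<le> c"
  shows "supZ A f \<le> c"
  unfolding supZ_def
proof (rule Max.boundedI[OF supZ_fin[OF assms(1)]])
  obtain x :: 'x where True by simp
  obtain a where "a \<in> A x" using assms(2) by blast
  then show "{\<bar>f x a\<bar> | x a. a \<in> A x} \<noteq> {}" by blast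
qed (use assms(3) in blast)


theorem lemma3p1:
  fixes A :: "'x::finite \<Rightarrow> 'a set"
    and P :: "'x \<Rightarrow> 'a \<Rightarrow> 'x pmf"
    and S :: "'x \<Rightarrow> 'a \<Rightarrow> 'x \<Rightarrow> real measure"
    and \<gamma> :: real
    and \<epsilon> :: "'x \<Rightarrow> real"
    and q :: "'x \<Rightarrow> 'a \<Rightarrow> real"
  assumes A_fin: "\<And>x. finite (A x)"
    and A_ne: "\<And>x. A x \<noteq> {}"
    and S_prob: "\<And>x a y. a \<in> A x \<Longrightarrow> prob_space (S x a y)"
    and S_borel: "\<And>x a y. a \<in> A x \<Longrightarrow> sets (S x a y) = sets borel"
    and S_second_moment: "\<And>x a y. a \<in> A x \<Longrightarrow> integrable (S x a y) (\<lambda>z. z ^ 2)"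
    and gamma: "0 \<le> \<gamma>" "\<gamma> < 1"
    and eps: "\<And>x. 0 \<le> \<epsilon> x \<and> \<epsilon> x \<le> 1"
  shows "(\<forall>x. \<forall>a \<in> A x. H_op A P S \<gamma> \<epsilon> q x a \<le> Q_opt A P S \<gamma> x a)
    \<and> supZ A (\<lambda>x a. H_op A P S \<gamma> \<epsilon> q x a - Q_opt A P S \<gamma> x a)
        \<le> \<gamma> / (1 - \<gamma>) *
          (supZ A (\<lambda>x a. Q_opt A P S \<gamma> x a - q x a)
           + supZ A (\<lambda>x a. max (q x a - Q_opt A P S \<gamma> x a) 0)
           + 2 * supZ A (Q_opt A P S \<gamma>) * Max (range (\<lambda>x. \<bar>\<epsilon> x\<bar>)))"
proof -
  define Z where "Z = (SIGMA y:(UNIV::'x set). A y \<times> (UNIV::'x set))"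
  have finZ: "finite Z" unfolding Z_def using A_fin by (intro finite_SigmaI) auto
  define B where "B = (\<Sum>(y,a,y')\<in>Z. \<bar>rmean S y a y'\<bar>)"
  have RB: "\<bar>rmean S y a y'\<bar> \<le> B" if "a \<in> A y" for y a y'
  proof -
    have "(\<lambda>(y,a,y'). \<bar>rmean S y a y'\<bar>) (y,a,y') \<le> B"
      unfolding B_def by (rule member_le_sum) (use that finZ in \<open>auto simp: Z_def\<close>)
    then show ?thesis by simp
  qed
  define G where "G x = argmax_set A q x" for x
  have G_sub: "G x \<subseteq> A x" for x unfolding G_def argmax_set_def by auto
  have G_fin: "finite (G x)" for x using G_sub A_fin by (rule finite_subset)
  have G_ne: "G x \<noteq> {}" for x
  proof -
    have "Max (q x ` A x) \<in> q x ` A x" using A_fin A_ne by (intro Max_in) auto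
    then obtain a where a: "a \<in> A x" "q x a = Max (q x ` A x)" by auto
    have "\<forall>b\<in>A x. q x b \<le> q x a" using a A_fin by auto
    then have "a \<in> G x" using a unfolding G_def argmax_set_def by auto
    then show ?thesis by auto
  qed
  define w where "w x a = (if a \<in> A x then \<epsilon> x / real (card (A x)) else 0)
    + (if a \<in> G x then (1 - \<epsilon> x) / real (card (G x)) else 0)" for x a
  have w_nn: "0 \<le> w x a" for x a unfolding w_def using eps[of x] by auto
  have cA: "card (A x) > 0" for x using A_fin A_ne by (simp add: card_gt_0_iff)
  have cG: "card (G x) > 0" for x using G_fin G_ne by (simp add: card_gt_0_iff)
  have w_split: "(\<Sum>a\<in>A x. w x a * g a) = \<epsilon> x * (\<Sum>a\<in>A x. (1 / real (card (A x))) * g a)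
      + (1 - \<epsilon> x) * (\<Sum>a\<in>G x. (1 / real (card (G x))) * g a)" for x and g :: "'a \<Rightarrow> real"
  proof -
    have "(\<Sum>a\<in>A x. w x a * g a) = (\<Sum>a\<in>A x. \<epsilon> x * ((1 / real (card (A x))) * g a))
       + (\<Sum>a\<in>A x. if a \<in> G x then (1 - \<epsilon> x) * ((1 / real (card (G x))) * g a) else 0)"
      unfolding sum.distrib[symmetric] by (intro sum.cong refl) (auto simp: w_def algebra_simps)
    also have "(\<Sum>a\<in>A x. if a \<in> G x then (1 - \<epsilon> x) * ((1 / real (card (G x))) * g a) else 0)
       = (\<Sum>a\<in>A x \<inter> G x. (1 - \<epsilon> x) * ((1 / real (card (G x))) * g a))"
      by (rule sum.inter_restrict[symmetric]) (rule A_fin)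
    also have "A x \<inter> G x = G x" using G_sub by auto
    finally show ?thesis by (simp add: sum_distrib_left)
  qed
  have avgA: "(\<Sum>a\<in>A x. 1 / real (card (A x))) = 1" for x using cA[of x] by simp
  have avgG: "(\<Sum>a\<in>G x. 1 / real (card (G x))) = 1" for x using cG[of x] by simp
  have w_sum: "(\<Sum>a\<in>A x. w x a) = 1" for x
    using w_split[of x "\<lambda>_. 1"] avgA[of x] avgG[of x] by simp
  define \<pi> where "\<pi> = eps_greedy A \<epsilon> q"
  have pmf_pi: "pmf (\<pi> x) a = w x a" for x a
  proof -
    have e: "\<pi> x = embed_pmf (w x)"
      unfolding \<pi>_def eps_greedy_def w_def G_def ..
    have "(\<integral>\<^sup>+a. ennreal (w x a) \<partial>count_space UNIV) = (\<Sum>a\<in>A x. ennreal (w x a))"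
      by (rule nn_integral_count_space'[OF A_fin]) (use G_sub in \<open>auto simp: w_def\<close>)
    also have "\<dots> = ennreal (\<Sum>a\<in>A x. w x a)" by (rule sum_ennreal) (rule w_nn)
    also have "\<dots> = 1" by (simp add: w_sum)
    finally show ?thesis unfolding e by (intro pmf_embed_pmf w_nn)
  qed
  have pi_pol: "(\<lambda>h y. \<pi> y) \<in> hist_policies A"
    unfolding hist_policies_def
  proof (safe)
    fix h y a assume "a \<in> set_pmf (\<pi> y)"
    then have "w y a \<noteq> 0" by (simp add: set_pmf_iff pmf_pi)
    then show "a \<in> A y" using G_sub by (auto simp: w_def split: if_splits)
  qed
  define Pol0 where "Pol0 = (\<lambda>(h::('x \<times> 'a) list) y. return_pmf (SOME a. a \<in> A y))"
  have Pol0: "Pol0 \<in> hist_policies A"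
    unfolding hist_policies_def Pol0_def using A_ne by (auto simp: some_in_eq)
  have hne: "hist_policies A \<noteq> {}" using Pol0 by blast
  have bdd: "bdd_above ((\<lambda>Pol. val_hist Pol P S \<gamma> x) ` hist_policies A)" for x
    using val_bound[OF _ A_fin RB gamma] by (auto simp: bdd_above_def abs_le_iff intro!: exI[of _ "B / (1 - \<gamma>)"])
  define Vs where "Vs = val_opt A P S \<gamma>"
  define Qs where "Qs = Q_opt A P S \<gamma>"
  define Vp where "Vp = val_sm \<pi> P S \<gamma>"
  define Qp where "Qp = Q_sm \<pi> P S \<gamma>"
  have Vup: "val_hist Pol P S \<gamma> x \<le> Vs x" if "Pol \<in> hist_policies A" for Pol x
    unfolding Vs_def val_opt_def by (rule cSUP_upper[OF that bdd])
  define M where "M x = Max (Qs x ` A x)" for x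
  have M_ge: "Qs x a \<le> M x" if "a \<in> A x" for x a
    unfolding M_def using A_fin that by auto
  have "\<exists>a. a \<in> A x \<and> Qs x a = M x" for x
  proof -
    have "M x \<in> Qs x ` A x" unfolding M_def using A_fin A_ne by (intro Max_in) auto
    then show ?thesis by auto
  qed
  then obtain astar where astar: "\<And>x. astar x \<in> A x" "\<And>x. Qs x (astar x) = M x" by metis
  have Vs_le: "Vs x \<le> M x" for x
    unfolding Vs_def val_opt_def
  proof (rule cSUP_least[OF hne])
    fix Pol assume pol: "Pol \<in> hist_policies A"
    have "val_hist Pol P S \<gamma> x = (\<Sum>a\<in>A x. pmf (Pol [] x) a * (rexp P S x a
      + \<gamma> * (\<Sum>y\<in>UNIV. pmf (P x a) y * val_hist (\<lambda>h. Pol ((x,a)#h)) P S \<gamma> y)))"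
      by (rule val_decomp[OF pol A_fin RB gamma])
    also have "\<dots> \<le> (\<Sum>a\<in>A x. pmf (Pol [] x) a * Qs x a)"
      unfolding Qs_def Q_opt_def
      by (intro sum_mono mult_left_mono add_left_mono pmf_nonneg gamma(1))
         (auto intro!: Vup[unfolded Vs_def] pol_shift[OF pol])
    also have "\<dots> \<le> M x"
      by (rule convex_le) (auto simp: pol_sum1[OF pol A_fin] M_ge)
    finally show "val_hist Pol P S \<gamma> x \<le> M x" .
  qed
  have Vp_eq: "Vp x = (\<Sum>a\<in>A x. w x a * Qp x a)" for x
    unfolding Vp_def val_sm_def Qp_def Q_sm_def
    using val_decomp[OF pi_pol A_fin RB gamma, of P x]
    by (simp add: pmf_pi val_sm_def)
  have Vp_le: "Vp y \<le> Vs y" for y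
    unfolding Vp_def val_sm_def by (rule Vup[OF pi_pol])
  have diff: "Qs x a - Qp x a = \<gamma> * (\<Sum>y\<in>UNIV. pmf (P x a) y * (Vs y - Vp y))" for x a
    unfolding Qs_def Qp_def Q_opt_def Q_sm_def Vs_def Vp_def
    by (simp add: right_diff_distrib sum_subtractf)
  have part1: "Qp x a \<le> Qs x a" for x a
  proof -
    have "0 \<le> \<gamma> * (\<Sum>y\<in>UNIV. pmf (P x a) y * (Vs y - Vp y))"
      using gamma Vp_le by (intro mult_nonneg_nonneg sum_nonneg) auto
    then show ?thesis using diff[of x a] by simp
  qed
  define D where "D = Max (range (\<lambda>y. Vs y - Vp y))"
  have D_ge: "Vs y - Vp y \<le> D" for y unfolding D_def by (rule Max_ge) auto
  have "D \<in> range (\<lambda>y. Vs y - Vp y)" unfolding D_def by (rule Max_in) auto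
  then obtain y0 where y0: "D = Vs y0 - Vp y0" by auto
  have QD: "Qs x a - Qp x a \<le> \<gamma> * D" for x a
    unfolding diff
    by (intro mult_left_mono gamma(1) convex_le) (auto simp: P_sum1 D_ge)
  define N1 where "N1 = supZ A (\<lambda>x a. Qs x a - q x a)"
  define N2 where "N2 = supZ A (\<lambda>x a. max (q x a - Qs x a) 0)"
  define N where "N = supZ A Qs"
  define E where "E = Max (range (\<lambda>x. \<bar>\<epsilon> x\<bar>))"
  define K where "K = N1 + N2 + 2 * N * E"
  have N_ge: "\<bar>Qs x a\<bar> \<le> N" if "a \<in> A x" for x a unfolding N_def by (rule supZ_ge[of A, OF A_fin that])
  have N1_ge: "\<bar>Qs x a - q x a\<bar> \<le> N1" if "a \<in> A x" for x a
    unfolding N1_def using supZ_ge[of A, OF A_fin that, of "\<lambda>x a. Qs x a - q x a"] by simp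
  have N2_ge: "\<bar>max (q x a - Qs x a) 0\<bar> \<le> N2" if "a \<in> A x" for x a
    unfolding N2_def using supZ_ge[of A, OF A_fin that, of "\<lambda>x a. max (q x a - Qs x a) 0"] by simp
  have E_ge: "\<bar>\<epsilon> x\<bar> \<le> E" for x unfolding E_def by (rule Max_ge) auto
  have Vx: "Vs x - Vp x \<le> K + \<gamma> * D" for x
  proof -
    have Mw: "M x = (\<Sum>a\<in>A x. w x a * M x)"
      using w_sum[of x] by (simp add: sum_distrib_right[symmetric])
    have "Vs x - Vp x \<le> M x - Vp x" using Vs_le[of x] by simp
    also have "\<dots> = (\<Sum>a\<in>A x. w x a * (M x - Qs x a)) + (\<Sum>a\<in>A x. w x a * (Qs x a - Qp x a))"
      unfolding Vp_eq by (subst Mw) (simp add: sum_subtractf[symmetric] sum.distrib[symmetric] algebra_simps)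
    also have "(\<Sum>a\<in>A x. w x a * (Qs x a - Qp x a)) \<le> \<gamma> * D"
      by (rule convex_le) (auto simp: w_nn w_sum QD)
    also have "(\<Sum>a\<in>A x. w x a * (M x - Qs x a)) \<le> K"
    proof -
      have a0: "astar x \<in> A x" by (rule astar(1))
      have N0: "0 \<le> N" using N_ge[OF a0] by simp
      have N10: "0 \<le> N1" using N1_ge[OF a0] by simp
      have N20: "0 \<le> N2" using N2_ge[OF a0] by simp
      have s1: "(\<Sum>a\<in>A x. (1 / real (card (A x))) * (M x - Qs x a)) \<le> 2 * N"
      proof (rule convex_le)
        fix a assume a: "a \<in> A x"
        have "M x \<le> N" using N_ge[OF a0] astar(2)[of x] by simp
        moreover have "- Qs x a \<le> N" using N_ge[OF a] by simp
        ultimately show "M x - Qs x a \<le> 2 * N" by simp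
      qed (auto simp: avgA cA)
      have s2: "(\<Sum>a\<in>G x. (1 / real (card (G x))) * (M x - Qs x a)) \<le> N1 + N2"
      proof (rule convex_le)
        fix b assume b: "b \<in> G x"
        have bA: "b \<in> A x" using b G_sub by auto
        have "q x (astar x) \<le> q x b" using b a0 unfolding G_def argmax_set_def by auto
        moreover have "Qs x (astar x) - q x (astar x) \<le> N1" using N1_ge[OF a0] by simp
        moreover have "q x b - Qs x b \<le> N2" using N2_ge[OF bA] by simp
        ultimately show "M x - Qs x b \<le> N1 + N2" using astar(2)[of x] by simp
      qed (auto simp: avgG cG)
      have "\<epsilon> x * (\<Sum>a\<in>A x. (1 / real (card (A x))) * (M x - Qs x a)) \<le> \<epsilon> x * (2 * N)"
        using eps[of x] s1 by (intro mult_left_mono) auto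
      also have "\<dots> \<le> E * (2 * N)" using E_ge[of x] eps[of x] N0 by (intro mult_right_mono) auto
      finally have t1: "\<epsilon> x * (\<Sum>a\<in>A x. (1 / real (card (A x))) * (M x - Qs x a)) \<le> 2 * N * E"
        by (simp add: mult_ac)
      have "(1 - \<epsilon> x) * (\<Sum>a\<in>G x. (1 / real (card (G x))) * (M x - Qs x a)) \<le> (1 - \<epsilon> x) * (N1 + N2)"
        using eps[of x] s2 by (intro mult_left_mono) auto
      also have "\<dots> \<le> N1 + N2" using eps[of x] N10 N20
        by (simp add: mult_left_le_one_le)
      finally have t2: "(1 - \<epsilon> x) * (\<Sum>a\<in>G x. (1 / real (card (G x))) * (M x - Qs x a)) \<le> N1 + N2" .
      show ?thesis unfolding w_split K_def using t1 t2 by simp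
    qed
    finally show ?thesis by simp
  qed
  have "D \<le> K + \<gamma> * D" using Vx[of y0] y0 by simp
  then have "(1 - \<gamma>) * D \<le> K" by (simp add: algebra_simps)
  then have DK: "D \<le> K / (1 - \<gamma>)" using gamma by (simp add: pos_le_divide_eq mult.commute)
  have final: "\<gamma> * D \<le> \<gamma> / (1 - \<gamma>) * K"
    using mult_left_mono[OF DK gamma(1)] by simp
  have H: "H_op A P S \<gamma> \<epsilon> q x a = Qp x a" for x a
    unfolding H_op_def Qp_def \<pi>_def ..
  show ?thesis
  proof
    show "\<forall>x. \<forall>a\<in>A x. H_op A P S \<gamma> \<epsilon> q x a \<le> Q_opt A P S \<gamma> x a"
      using part1 unfolding H Qs_def by blast
    have "supZ A (\<lambda>x a. H_op A P S \<gamma> \<epsilon> q x a - Q_opt A P S \<gamma> x a) \<le> \<gamma> / (1 - \<gamma>) * K"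
    proof (rule supZ_le[OF A_fin A_ne])
      fix x a assume "a \<in> A x"
      have "\<bar>H_op A P S \<gamma> \<epsilon> q x a - Q_opt A P S \<gamma> x a\<bar> = Qs x a - Qp x a"
        using part1[of x a] unfolding H Qs_def by simp
      also have "\<dots> \<le> \<gamma> / (1 - \<gamma>) * K" using QD[of x a] final by simp
      finally show "\<bar>H_op A P S \<gamma> \<epsilon> q x a - Q_opt A P S \<gamma> x a\<bar> \<le> \<gamma> / (1 - \<gamma>) * K" .
    qed
    then show "supZ A (\<lambda>x a. H_op A P S \<gamma> \<epsilon> q x a - Q_opt A P S \<gamma> x a)
        \<le> \<gamma> / (1 - \<gamma>) *
          (supZ A (\<lambda>x a. Q_opt A P S \<gamma> x a - q x a)
           + supZ A (\<lambda>x a. max (q x a - Q_opt A P S \<gamma> x a) 0)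
           + 2 * supZ A (Q_opt A P S \<gamma>) * Max (range (\<lambda>x. \<bar>\<epsilon> x\<bar>)))"
      unfolding K_def N1_def N2_def N_def E_def Qs_def .
  qed
qed

end
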